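(* For all sufficiently large $n$, with $\widetilde{h}$ defined as in the context, $\widetilde{h}(e^{it}) \in \overline{\mathbb{D}}$ for every $t \in [-\pi,\pi]$, where $\overline{\mathbb{D}} = \{z \in \mathbb{C}: |z|\le 1\}$.
   Context: Let $n$ be a positive integer, $a = n^{-2/5}$ and $r = a^{-1/2}$ (floor functions omitted, so $r$ is a positive integer). Let $r_* \in \{1,\dots,r\}$ be such that $\sum_{j=1}^{r_*} \frac{1}{\log^2(j+3)}-\sum_{j=r_*+1}^r \frac{1}{\log^2(j+3)} \in [20,21]$. Let $\epsilon_j = +1$ for $1 \le j \le r_*$ and $\epsilon_j = -1$ for $r_*+1 \le j \le r$. Let $\lambda_a>0$ be such that $\sum_{j=1}^r \frac{\lambda_a}{j^2\log^2(j+3)} = 1$ and set $d_j = \frac{\lambda_a}{j^2\log^2(j+3)}$. Define $\widetilde{h}(z) = \widetilde{\lambda}_a\sum_{j=1}^r \epsilon_j d_j z^j$, where $\widetilde{\lambda}_a>0$ is chosen so that $\widetilde{h}(1) = 1$. $\log$ is the natural logarithm. *)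

theory Defs
  imports Complex_Main
begin

text \<open>a = n^(-2/5), r = a^(-1/2) with the omitted floor made explicit.\<close>
definition a_of :: "nat \<Rightarrow> real" where
  "a_of n = real n powr (-2/5)"

definition r_of :: "nat \<Rightarrow> nat" where
  "r_of n = nat \<lfloor>a_of n powr (-1/2)\<rfloor>"

definition lam_a :: "nat \<Rightarrow> real" where
  "lam_a r = 1 / (\<Sum>j=1..r. 1 / (real j ^ 2 * ln (real j + 3) ^ 2))"

definition d_coef :: "nat \<Rightarrow> nat \<Rightarrow> real" where
  "d_coef r j = lam_a r / (real j ^ 2 * ln (real j + 3) ^ 2)"

definition eps :: "nat \<Rightarrow> nat \<Rightarrow> real" where
  "eps rs j = (if j \<le> rs then 1 else -1)"

definition balance :: "nat \<Rightarrow> nat \<Rightarrow> real" where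
  "balance r rs = (\<Sum>j=1..rs. 1 / ln (real j + 3) ^ 2) - (\<Sum>j=rs+1..r. 1 / ln (real j + 3) ^ 2)"

definition htilde :: "real \<Rightarrow> nat \<Rightarrow> nat \<Rightarrow> complex \<Rightarrow> complex" where
  "htilde lt rs r z = complex_of_real lt * (\<Sum>j=1..r. complex_of_real (eps rs j * d_coef r j) * z ^ j)"

end

theory Submission
  imports Defs "HOL-Analysis.Harmonic_Numbers" "HOL-Analysis.Complex_Transcendental" "HOL-Real_Asymp.Real_Asymp"
begin


lemma sin_coeff_small: "sin_coeff (Suc 0) = 1" "sin_coeff (Suc (Suc 0)) = 0" by (simp_all add: sin_coeff_def)
lemma fact_three_real: "fact 3 = (6::real)" by (simp add: numeral_3_eq_3)

lemma sin_cubic_lower: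
  fixes z :: real assumes "0 \<le> z" shows "z - z^3/6 \<le> sin z"
proof -
  have A: "\<bar>sin z - (\<Sum>m<3. sin_coeff m * z ^ m)\<bar> \<le> inverse (fact 3) * \<bar>z\<bar> ^ 3"
    using Maclaurin_sin_bound[of z 3] .
  have B: "(\<Sum>m<3. sin_coeff m * z ^ m) = z"
    by (simp add: numeral_3_eq_3 sin_coeff_small)
  have C: "inverse (fact 3) * \<bar>z\<bar> ^ 3 = z^3/6"
    using assms unfolding fact_three_real by simp
  show ?thesis using A B C by linarith
qed

lemma one_minus_cos_eq: "1 - cos (x::real) = 2 * (sin (x/2))^2"
  using cos_double_sin[of "x/2"] by simp

lemma one_minus_cos_lower:
  fixes x :: real assumes "\<bar>x\<bar> \<le> 4"
  shows "(x^2/2) * (1 - x^2/24)^2 \<le> 1 - cos x"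
proof -
  define z where "z = \<bar>x\<bar>/2"
  have z0: "0 \<le> z" and z2: "z \<le> 2" using assms by (auto simp: z_def)
  have "(sin (x/2))^2 = (sin z)^2"
    by (cases "x \<ge> 0") (auto simp: z_def)
  have lo: "z - z^3/6 \<le> sin z" using sin_cubic_lower[OF z0] .
  have "z*z \<le> 2*2" using z0 z2 by (intro mult_mono) auto
  hence "z^2 \<le> 4" by (simp add: power2_eq_square)
  have nn: "0 \<le> z - z^3/6"
  proof -
    have "z^3 = z * z^2" by (simp add: power2_eq_square power3_eq_cube)
    also have "\<dots> \<le> z * 4" using \<open>z^2 \<le> 4\<close> z0 by (intro mult_left_mono) auto
    finally show ?thesis using z0 by linarith
  qed
  have "(z - z^3/6)^2 \<le> (sin z)^2" using lo nn by (intro power_mono) auto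
  have zz: "z^2 = x^2/4" by (simp add: z_def power_divide)
  have e1: "(z - z^3/6)^2 = z^2 * (1 - z^2/6)^2"
    by (simp add: power2_eq_square power3_eq_cube algebra_simps)
  have "(x^2/2) * (1 - x^2/24)^2 = 2 * (z - z^3/6)^2"
    unfolding e1 zz by simp
  also have "\<dots> \<le> 2 * (sin z)^2" using \<open>(z - z^3/6)^2 \<le> (sin z)^2\<close> by simp
  also have "\<dots> = 1 - cos x" using one_minus_cos_eq[of x] \<open>(sin (x/2))^2 = (sin z)^2\<close> by simp
  finally show ?thesis .
qed

lemma one_minus_cos_upper: "1 - cos (x::real) \<le> x^2/2"
proof -
  have "\<bar>sin (x/2)\<bar> \<le> \<bar>x/2\<bar>" by (rule abs_sin_x_le_abs_x)
  hence "(sin (x/2))^2 \<le> (x/2)^2" by (metis abs_le_square_iff)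
  thus ?thesis using one_minus_cos_eq[of x] by (simp add: power2_eq_square)
qed

lemma sinc_mono:
  fixes x y :: real assumes "0 < x" "x \<le> y" "y \<le> pi"
  shows "sin y * x \<le> sin x * y"
proof -
  have g: "0 \<le> sin u - u * cos u" if "0 \<le> u" "u \<le> pi" for u
  proof -
    have "(\<lambda>v. sin v - v * cos v) 0 \<le> (\<lambda>v. sin v - v * cos v) u"
    proof (rule DERIV_nonneg_imp_nondecreasing[OF \<open>0 \<le> u\<close>])
      fix v assume "0 \<le> v" "v \<le> u"
      have "DERIV (\<lambda>v. sin v - v * cos v) v :> cos v - (1 * cos v + v * (- sin v))"
        by (auto intro!: derivative_eq_intros)
      moreover have "0 \<le> v * sin v" using \<open>0 \<le> v\<close> \<open>v \<le> u\<close> that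
        by (intro mult_nonneg_nonneg sin_ge_zero) auto
      ultimately show "\<exists>y. DERIV (\<lambda>v. sin v - v * cos v) v :> y \<and> 0 \<le> y"
        by (intro exI[of _ "v * sin v"]) (auto simp: algebra_simps)
    qed
    thus ?thesis by simp
  qed
  have "(\<lambda>v. sin v / v) y \<le> (\<lambda>v. sin v / v) x"
  proof (rule DERIV_nonpos_imp_nonincreasing[OF \<open>x \<le> y\<close>])
    fix v assume v: "x \<le> v" "v \<le> y"
    hence vp: "0 < v" using assms by auto
    have "DERIV (\<lambda>v. sin v / v) v :> (cos v * v - sin v * 1) / (v * v)"
      using vp by (intro DERIV_divide DERIV_sin DERIV_ident) (auto simp: power2_eq_square)
    moreover have "(cos v * v - sin v * 1) / (v * v) \<le> 0"
    proof (rule divide_nonpos_pos)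
      show "cos v * v - sin v * 1 \<le> 0" using g[of v] vp v assms by (simp add: algebra_simps)
      show "0 < v * v" using vp by simp
    qed
    ultimately show "\<exists>d. DERIV (\<lambda>v. sin v / v) v :> d \<and> d \<le> 0" by blast
  qed
  hence "sin y / y \<le> sin x / x" by simp
  hence "sin y / y * (x*y) \<le> sin x / x * (x*y)"
    using assms by (intro mult_right_mono) auto
  thus ?thesis using assms by (simp add: mult.commute mult.left_commute)
qed



lemma ln2_ge: "2/3 \<le> ln (2::real)" by (rule ln2_ge_two_thirds)

definition w :: "nat \<Rightarrow> real" where "w j = 1 / (ln (real j + 3))^2"

lemma ln4_ge: "4/3 \<le> ln (4::real)"
proof -
  have "ln (4::real) = ln (2*2)" by simp
  also have "\<dots> = ln 2 + ln 2" by (subst ln_mult) auto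
  finally show ?thesis using ln2_ge by linarith
qed

lemma ln4_le: "ln (4::real) \<le> 3/2"
proof -
  have "1 + 3/4 + (3/4)^2/2 \<le> exp (3/4::real)" by (rule exp_lower_Taylor_quadratic) simp
  hence a: "65/32 \<le> exp (3/4::real)" by (simp add: power2_eq_square)
  have "(65/32)*(65/32) \<le> exp (3/4::real) * exp (3/4)" using a by (intro mult_mono) auto
  also have "\<dots> = exp (3/2)" by (simp flip: exp_add)
  finally have "4 \<le> exp (3/2::real)" by simp
  hence "ln 4 \<le> ln (exp (3/2::real))" by (subst ln_le_cancel_iff) auto
  thus ?thesis by simp
qed

lemma ln5_le: "ln (5::real) \<le> 2"
proof -
  have "1 + 2 + 2^2/2 \<le> exp (2::real)" by (rule exp_lower_Taylor_quadratic) simp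
  hence "5 \<le> exp (2::real)" by simp
  hence "ln 5 \<le> ln (exp (2::real))" by (subst ln_le_cancel_iff) auto
  thus ?thesis by simp
qed

lemma ln_j3_ge: assumes "1 \<le> j" shows "4/3 \<le> ln (real j + 3)"
proof -
  have "ln 4 \<le> ln (real j + 3)" using assms by (subst ln_le_cancel_iff) auto
  thus ?thesis using ln4_ge by linarith
qed

lemma w_pos: "0 < w j"
proof -
  have "0 < ln (real j + 3)" by simp
  thus ?thesis by (simp add: w_def)
qed

lemma w_le: assumes "1 \<le> j" shows "w j \<le> 9/16"
proof -
  have a: "4/3 \<le> ln (real j + 3)" using assms by (rule ln_j3_ge)
  have "(4/3)*(4/3) \<le> ln (real j + 3) * ln (real j + 3)" using a by (intro mult_mono) auto
  hence "16/9 \<le> (ln (real j + 3))^2" by (simp add: power2_eq_square)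
  thus ?thesis unfolding w_def using a by (simp add: field_simps)
qed

lemma w_anti: assumes "i \<le> j" shows "w j \<le> w i"
proof -
  have a: "0 < ln (real i + 3)" by simp
  have b: "ln (real i + 3) \<le> ln (real j + 3)" using assms by (subst ln_le_cancel_iff) auto
  have "ln (real i + 3) * ln (real i + 3) \<le> ln (real j + 3) * ln (real j + 3)"
    using a b by (intro mult_mono) auto
  hence "(ln (real i + 3))^2 \<le> (ln (real j + 3))^2" by (simp add: power2_eq_square)
  moreover have "0 < (ln (real i + 3))^2" using a by simp
  ultimately show ?thesis unfolding w_def by (intro divide_left_mono) auto
qed

lemma w1_bounds: "4/9 \<le> w 1" "w 1 \<le> 9/16"
proof -
  have e: "w 1 = 1 / (ln 4)^2" by (simp add: w_def)
  have a: "4/3 \<le> ln (4::real)" "ln (4::real) \<le> 3/2" using ln4_ge ln4_le by auto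
  have "ln (4::real) * ln 4 \<le> (3/2)*(3/2)" using a by (intro mult_mono) auto
  hence "(ln (4::real))^2 \<le> 9/4" by (simp add: power2_eq_square)
  thus "4/9 \<le> w 1" unfolding e using a by (simp add: field_simps)
  show "w 1 \<le> 9/16" by (rule w_le) simp
qed

lemma w2_lower: "1/4 \<le> w 2"
proof -
  have e: "w 2 = 1 / (ln 5)^2" by (simp add: w_def)
  have a: "0 < ln (5::real)" "ln (5::real) \<le> 2" using ln5_le by auto
  have "ln (5::real) * ln 5 \<le> 2*2" using a by (intro mult_mono) auto
  hence "(ln (5::real))^2 \<le> 4" by (simp add: power2_eq_square)
  thus ?thesis unfolding e using a by (simp add: field_simps)
qed

lemma ln_diff_ge: fixes x :: real assumes "2 \<le> x" shows "1/x \<le> ln x - ln (x - 1)"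
proof -
  have "ln ((x-1)/x) \<le> (x-1)/x - 1" using assms by (intro ln_le_minus_one) auto
  moreover have "ln ((x-1)/x) = ln (x-1) - ln x" using assms by (subst ln_div) auto
  moreover have "(x-1)/x - 1 = - (1/x)" using assms by (simp add: field_simps)
  ultimately show ?thesis by linarith
qed

lemma w_tele: assumes "1 \<le> j" shows "w j / (real j + 3) \<le> 1 / ln (real j + 2) - 1 / ln (real j + 3)"
proof -
  define x where "x = real j + 3"
  have x4: "4 \<le> x" using assms by (simp add: x_def)
  have j2: "real j + 2 = x - 1" by (simp add: x_def)
  have lx: "4/3 \<le> ln x" unfolding x_def using assms by (rule ln_j3_ge)
  have l1: "0 < ln (x - 1)" using x4 by simp
  have l2: "ln (x - 1) \<le> ln x" using x4 by (subst ln_le_cancel_iff) auto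
  have d: "1/x \<le> ln x - ln (x - 1)" using x4 by (intro ln_diff_ge) auto
  have "w j / (real j + 3) = (1/x) / (ln x * ln x)" by (simp add: w_def x_def power2_eq_square)
  also have "\<dots> \<le> (ln x - ln (x - 1)) / (ln x * ln x)"
    using d lx by (intro divide_right_mono) auto
  also have "\<dots> \<le> (ln x - ln (x - 1)) / (ln (x - 1) * ln x)"
    using d x4 lx l1 l2 by (intro divide_left_mono mult_right_mono mult_pos_pos) auto
  also have "\<dots> = 1 / ln (x - 1) - 1 / ln x" using l1 lx by (simp add: field_simps)
  finally show ?thesis by (simp add: j2 x_def)
qed



lemma M_aux: "1 \<le> r \<Longrightarrow> (\<Sum>j=1..r. w j / real j) \<le> 9/16 + (5/2) * (1 / ln 4) - (5/2) * (1 / ln (real r + 3))"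
proof (induction r rule: dec_induct[where i=1])
  case base thus ?case using w1_bounds by simp
next
  case (step r)
  have r2: "2 \<le> Suc r" using step by simp
  have t: "w (Suc r) / real (Suc r + 3) \<le> 1 / ln (real (Suc r) + 2) - 1 / ln (real (Suc r) + 3)"
    using w_tele[of "Suc r"] by simp
  have A: "w (Suc r) / real (Suc r) \<le> (5/2) * (w (Suc r) / real (Suc r + 3))"
  proof -
    have "w (Suc r) * real (Suc r + 3) \<le> w (Suc r) * ((5/2) * real (Suc r))"
      using w_pos[of "Suc r"] r2 by (intro mult_left_mono) auto
    thus ?thesis using w_pos[of "Suc r"] by (simp add: field_simps)
  qed
  have B: "(5/2) * (w (Suc r) / real (Suc r + 3)) \<le> (5/2) * (1 / ln (real (Suc r) + 2) - 1 / ln (real (Suc r) + 3))"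
    using t by (intro mult_left_mono) auto
  have C: "real (Suc r) + 2 = real r + 3" by simp
  have "w (Suc r) / real (Suc r) \<le> (5/2) * (1 / ln (real r + 3) - 1 / ln (real (Suc r) + 3))"
    using A B[unfolded C] by linarith
  hence D: "w (Suc r) / real (Suc r) \<le> (5/2) * (1 / ln (real r + 3)) - (5/2) * (1 / ln (real (Suc r) + 3))"
    by (simp only: right_diff_distrib)
  moreover have "(\<Sum>j=1..Suc r. w j / real j) = (\<Sum>j=1..r. w j / real j) + w (Suc r) / real (Suc r)"
    using step by simp
  ultimately show ?case using step.IH by linarith
qed

lemma M_bound: "(\<Sum>j=1..r. w j / real j) \<le> 39/16"
proof (cases "r = 0")
  case True thus ?thesis by simp
next
  case False
  hence "1 \<le> r" by simp
  from M_aux[OF this] have a: "(\<Sum>j=1..r. w j / real j) \<le> 9/16 + (5/2) * (1 / ln 4) - (5/2) * (1 / ln (real r + 3))" .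
  have "0 < ln (real r + 3)" by simp
  hence "0 \<le> 1 / ln (real r + 3)" by simp
  moreover have "1 / ln 4 \<le> (3/4::real)" using ln4_ge by (simp add: field_simps)
  ultimately show ?thesis using a by linarith
qed

lemma inv_sq_step: assumes "1 \<le> b" shows "1 / (real (Suc b))^2 \<le> 1 / real b - 1 / real (Suc b)"
proof -
  have b1: "1 \<le> real b" using assms by simp
  have e: "1 / real b - 1 / real (Suc b) = 1 / (real b * (real b + 1))" using b1 by (simp add: field_simps)
  have "real b * (real b + 1) \<le> (real b + 1) * (real b + 1)" using b1 by (intro mult_right_mono) auto
  moreover have "0 < real b * (real b + 1)" using b1 by simp
  ultimately have "1 / ((real b + 1) * (real b + 1)) \<le> 1 / (real b * (real b + 1))"
    by (intro divide_left_mono) auto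
  hence "1 / (real (Suc b))^2 \<le> 1 / (real b * (real b + 1))"
    by (simp add: power2_eq_square add.commute)
  thus ?thesis using e by simp
qed

lemma inv_sq_tail: assumes "1 \<le> a" "a \<le> b" shows "(\<Sum>k=a+1..b. 1 / (real k)^2) \<le> 1 / real a - 1 / real b"
  using assms(2)
proof (induction b rule: dec_induct)
  case base thus ?case by simp
next
  case (step b)
  have "1 / (real (Suc b))^2 \<le> 1 / real b - 1 / real (Suc b)" using step assms by (intro inv_sq_step) auto
  moreover have "(\<Sum>k=a+1..Suc b. 1 / (real k)^2) = (\<Sum>k=a+1..b. 1 / (real k)^2) + 1 / (real (Suc b))^2"
    using step by simp
  ultimately show ?case using step.IH by linarith
qed

lemma abel_sum:
  fixes a h :: "nat \<Rightarrow> real"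
  shows "(\<Sum>j=1..r. a j * h j) = (\<Sum>m=1..r. (\<Sum>j=1..m. a j) * (h m - h (Suc m))) + (\<Sum>j=1..r. a j) * h (Suc r)"
proof (induction r)
  case 0 thus ?case by simp
next
  case (Suc r)
  thus ?case by (simp add: algebra_simps)
qed



lemma tele: "m \<le> n \<Longrightarrow> (\<Sum>i=m..<n. (h i - h (Suc i)) :: real) = h m - h n"
  by (induction n rule: dec_induct) auto

lemma abel_lower:
  fixes a h :: "nat \<Rightarrow> real"
  assumes mono: "\<And>m. 1 \<le> m \<Longrightarrow> m \<le> r \<Longrightarrow> h (Suc m) \<le> h m" and h0: "0 \<le> h (Suc r)"
  and K: "1 \<le> K" "K \<le> rs" "rs \<le> r"
  and W1: "\<And>m. 1 \<le> m \<Longrightarrow> m < K \<Longrightarrow> 0 \<le> (\<Sum>j=1..m. a j)"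
  and W2: "\<And>m. K \<le> m \<Longrightarrow> m < rs \<Longrightarrow> A \<le> (\<Sum>j=1..m. a j)"
  and W3: "\<And>m. rs \<le> m \<Longrightarrow> m \<le> r \<Longrightarrow> B \<le> (\<Sum>j=1..m. a j)"
  shows "A * (h K - h rs) + B * h rs \<le> (\<Sum>j=1..r. a j * h j)"
proof -
  define L where "L m = (if m < K then 0 else if m < rs then A else B)" for m
  have "(\<Sum>m=1..r. L m * (h m - h (Suc m))) \<le> (\<Sum>m=1..r. (\<Sum>j=1..m. a j) * (h m - h (Suc m)))"
  proof (rule sum_mono)
    fix m assume "m \<in> {1..r}"
    hence m: "1 \<le> m" "m \<le> r" by auto
    have "L m \<le> (\<Sum>j=1..m. a j)" using W1 W2 W3 m by (auto simp: L_def)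
    moreover have "0 \<le> h m - h (Suc m)" using mono m by auto
    ultimately show "L m * (h m - h (Suc m)) \<le> (\<Sum>j=1..m. a j) * (h m - h (Suc m))"
      by (intro mult_right_mono) auto
  qed
  moreover have "(\<Sum>m=1..r. L m * (h m - h (Suc m))) = A * (h K - h rs) + B * (h rs - h (Suc r))"
  proof -
    have s: "{1..r} = {1..<Suc r}" by auto
    have "(\<Sum>m=1..<Suc r. L m * (h m - h (Suc m))) = (\<Sum>m=1..<K. L m * (h m - h (Suc m))) + (\<Sum>m=K..<Suc r. L m * (h m - h (Suc m)))"
      using K by (intro sum.atLeastLessThan_concat[symmetric]) auto
    also have "(\<Sum>m=K..<Suc r. L m * (h m - h (Suc m))) = (\<Sum>m=K..<rs. L m * (h m - h (Suc m))) + (\<Sum>m=rs..<Suc r. L m * (h m - h (Suc m)))"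
      using K by (intro sum.atLeastLessThan_concat[symmetric]) auto
    also have "(\<Sum>m=1..<K. L m * (h m - h (Suc m))) = 0" by (auto simp: L_def)
    also have "(\<Sum>m=K..<rs. L m * (h m - h (Suc m))) = (\<Sum>m=K..<rs. A * (h m - h (Suc m)))"
      by (intro sum.cong) (auto simp: L_def)
    also have "\<dots> = A * (h K - h rs)" using K by (simp add: sum_distrib_left[symmetric] tele)
    also have "(\<Sum>m=rs..<Suc r. L m * (h m - h (Suc m))) = (\<Sum>m=rs..<Suc r. B * (h m - h (Suc m)))"
      using K by (intro sum.cong) (auto simp: L_def)
    also have "\<dots> = B * (h rs - h (Suc r))" using K by (simp add: sum_distrib_left[symmetric] tele)
    finally show ?thesis using s by simp
  qed
  moreover have "B * h (Suc r) \<le> (\<Sum>j=1..r. a j) * h (Suc r)"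
    using W3[of r] K h0 by (intro mult_right_mono) auto
  ultimately show ?thesis unfolding abel_sum[of a h r] by (simp add: algebra_simps)
qed



definition cc :: "nat \<Rightarrow> nat \<Rightarrow> real" where "cc rs j = eps rs j * w j / (real j)^2"
definition hh :: "real \<Rightarrow> nat \<Rightarrow> real" where "hh t m = (1 - cos (real m * t)) / (real m)^2"

lemma hh_nonneg: "0 \<le> hh t m"
  unfolding hh_def by (intro divide_nonneg_nonneg) auto

lemma hh_sin: "hh t m = 2 * (sin (real m * \<bar>t\<bar> / 2))^2 / (real m)^2"
proof -
  have "1 - cos (real m * t) = 2 * (sin (real m * t / 2))^2" using one_minus_cos_eq by simp
  moreover have "(sin (real m * t / 2))^2 = (sin (real m * \<bar>t\<bar> / 2))^2"
    by (cases "t \<ge> 0") auto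
  ultimately show ?thesis unfolding hh_def by simp
qed

lemma hh_mono:
  assumes "1 \<le> m" "real (Suc m) * \<bar>t\<bar> \<le> 2 * pi"
  shows "hh t (Suc m) \<le> hh t m"
proof (cases "t = 0")
  case True thus ?thesis by (simp add: hh_def)
next
  case False
  define x where "x = real m * \<bar>t\<bar> / 2"
  define y where "y = real (Suc m) * \<bar>t\<bar> / 2"
  have x0: "0 < x" using assms False by (simp add: x_def)
  have xy: "x \<le> y" by (simp add: x_def y_def field_simps)
  have ypi: "y \<le> pi" using assms by (simp add: y_def)
  have s: "sin y * x \<le> sin x * y" using sinc_mono[OF x0 xy ypi] .
  have sy: "0 \<le> sin y" using x0 xy ypi by (intro sin_ge_zero) auto
  have sx: "0 \<le> sin x" using x0 xy ypi by (intro sin_ge_zero) auto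
  have "(sin y * x)^2 \<le> (sin x * y)^2" using s sy x0 by (intro power_mono) auto
  hence "(sin y)^2 * x^2 \<le> (sin x)^2 * y^2" by (simp add: power_mult_distrib)
  hence "(sin y)^2 / y^2 \<le> (sin x)^2 / x^2" using x0 xy by (simp add: field_simps)
  hence "(t^2/2) * ((sin y)^2 / y^2) \<le> (t^2/2) * ((sin x)^2 / x^2)" by (intro mult_left_mono) auto
  moreover have "hh t m = (t^2/2) * ((sin x)^2 / x^2)"
    using assms False by (simp add: hh_sin x_def power_divide power_mult_distrib field_simps)
  moreover have "hh t (Suc m) = (t^2/2) * ((sin y)^2 / y^2)"
    using assms False by (simp add: hh_sin[of t "Suc m"] y_def power_divide power_mult_distrib field_simps del: of_nat_Suc)
  ultimately show ?thesis by simp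
qed

lemma hh_mono_gen:
  assumes "1 \<le> a" "a \<le> b" "real b * \<bar>t\<bar> \<le> 2 * pi"
  shows "hh t b \<le> hh t a"
  using assms(2,3)
proof (induction b rule: dec_induct)
  case base thus ?case by simp
next
  case (step n)
  have "real n * \<bar>t\<bar> \<le> real (Suc n) * \<bar>t\<bar>" by (intro mult_right_mono) auto
  hence "hh t n \<le> hh t a" using step by simp
  moreover have "hh t (Suc n) \<le> hh t n" using step assms(1) by (intro hh_mono) auto
  ultimately show ?case by simp
qed

lemma R_eq: "(\<Sum>j=1..r. cc rs j * (1 - cos (real j * t))) = (\<Sum>j=1..r. (eps rs j * w j) * hh t j)"
  by (intro sum.cong) (auto simp: cc_def hh_def)

lemma balance_w: "balance r rs = (\<Sum>j=1..rs. w j) - (\<Sum>j=rs+1..r. w j)"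
  by (simp add: balance_def w_def)

lemma W_low: assumes "m \<le> rs" shows "(\<Sum>j=1..m. eps rs j * w j) = (\<Sum>j=1..m. w j)"
  using assms by (intro sum.cong) (auto simp: eps_def)

lemma W_mw: "real m * w m \<le> (\<Sum>j=1..m. w j)"
proof -
  have "(\<Sum>j=1..m. w m) \<le> (\<Sum>j=1..m. w j)" by (intro sum_mono w_anti) auto
  thus ?thesis by simp
qed

lemma W_high: assumes "rs \<le> m" "m \<le> r" shows "balance r rs \<le> (\<Sum>j=1..m. eps rs j * w j)"
proof -
  have "(\<Sum>j=1..m. eps rs j * w j) = (\<Sum>j=1..rs. eps rs j * w j) + (\<Sum>j=rs+1..rs + (m - rs). eps rs j * w j)"
    using assms sum.ub_add_nat[of 1 rs "\<lambda>j. eps rs j * w j" "m - rs"] by simp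
  also have "(\<Sum>j=1..rs. eps rs j * w j) = (\<Sum>j=1..rs. w j)" by (rule W_low) simp
  also have "(\<Sum>j=rs+1..rs + (m - rs). eps rs j * w j) = - (\<Sum>j=rs+1..m. w j)"
    using assms by (simp add: sum_negf[symmetric] eps_def)
  finally have e: "(\<Sum>j=1..m. eps rs j * w j) = (\<Sum>j=1..rs. w j) - (\<Sum>j=rs+1..m. w j)" by simp
  have "(\<Sum>j=rs+1..m. w j) \<le> (\<Sum>j=rs+1..r. w j)"
    using assms by (intro sum_mono2) (auto intro: less_imp_le[OF w_pos])
  thus ?thesis using e balance_w[of r rs] by simp
qed

lemma regimeA_R:
  assumes "1 \<le> K" "K \<le> rs" "rs \<le> r" "real (Suc r) * \<bar>t\<bar> \<le> 2 * pi"
  shows "real K * w rs * (hh t K - hh t rs) + balance r rs * hh t rs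
         \<le> (\<Sum>j=1..r. cc rs j * (1 - cos (real j * t)))"
  unfolding R_eq
proof (rule abel_lower[where K=K and rs=rs])
  fix m assume m: "1 \<le> m" "m \<le> r"
  have "real (Suc m) * \<bar>t\<bar> \<le> real (Suc r) * \<bar>t\<bar>" using m by (intro mult_right_mono) auto
  thus "hh t (Suc m) \<le> hh t m" using m assms by (intro hh_mono) auto
next
  show "0 \<le> hh t (Suc r)" by (rule hh_nonneg)
next
  fix m assume m: "1 \<le> m" "m < K"
  show "0 \<le> (\<Sum>j=1..m. eps rs j * w j)" using m assms
    by (subst W_low) (auto intro!: sum_nonneg less_imp_le[OF w_pos])
next
  fix m assume m: "K \<le> m" "m < rs"
  have "real K * w rs \<le> real m * w m"
    using m w_pos[of rs] by (intro mult_mono w_anti) (auto intro: less_imp_le)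
  also have "\<dots> \<le> (\<Sum>j=1..m. w j)" by (rule W_mw)
  finally show "real K * w rs \<le> (\<Sum>j=1..m. eps rs j * w j)" using m by (subst W_low) auto
next
  fix m assume "rs \<le> m" "m \<le> r"
  thus "balance r rs \<le> (\<Sum>j=1..m. eps rs j * w j)" by (rule W_high)
qed (use assms in auto)



lemma hh_lower:
  assumes "1 \<le> m" "\<bar>real m * t\<bar> \<le> 4"
  shows "(t^2/2) * (1 - (real m * t)^2/24)^2 \<le> hh t m"
proof -
  have "((real m * t)^2/2) * (1 - (real m * t)^2/24)^2 \<le> 1 - cos (real m * t)"
    using assms by (intro one_minus_cos_lower) auto
  hence I: "((real m * t)^2/2) * (1 - (real m * t)^2/24)^2 / (real m)^2 \<le> hh t m"
    unfolding hh_def by (intro divide_right_mono) auto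
  have E: "((real m * t)^2/2) * (1 - (real m * t)^2/24)^2 / (real m)^2 = (t^2/2) * (1 - (real m * t)^2/24)^2"
    using assms by (simp add: power_mult_distrib field_simps)
  show ?thesis using I unfolding E .
qed

lemma hh_double:
  assumes "1 \<le> m"
  shows "hh t m - hh t (2*m) = (1 - cos (real m * t))^2 / (2 * (real m)^2)"
proof -
  have c: "cos (real (2*m) * t) = 2 * (cos (real m * t))^2 - 1"
    using cos_double_cos[of "real m * t"] by (simp add: mult.assoc)
  show ?thesis using assms unfolding hh_def c by (simp add: field_simps power2_eq_square)
qed

lemma regimeA:
  assumes rs3: "3 \<le> rs" and rsr: "rs \<le> r" and bal: "20 \<le> balance r rs"
    and tr: "real (Suc r) * \<bar>t\<bar> \<le> 2 * pi" and big: "10^6 \<le> real rs * w rs"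
  shows "7 * t^2 \<le> (\<Sum>j=1..r. cc rs j * (1 - cos (real j * t)))"
proof -
  define K where "K = rs div 2"
  have K1: "1 \<le> K" using rs3 by (simp add: K_def)
  have K2: "2 * K \<le> rs" by (simp add: K_def)
  have K3: "rs \<le> 3 * K" using rs3 by (simp add: K_def)
  have Krs: "K \<le> rs" using K2 by simp
  have X: "real K * w rs * (hh t K - hh t rs) + balance r rs * hh t rs
         \<le> (\<Sum>j=1..r. cc rs j * (1 - cos (real j * t)))"
    using K1 Krs rsr tr by (intro regimeA_R) auto
  have "real rs * \<bar>t\<bar> \<le> real (Suc r) * \<bar>t\<bar>" using rsr by (intro mult_right_mono) auto
  hence rst: "real rs * \<bar>t\<bar> \<le> 2 * pi" using tr by linarith
  have h2: "hh t rs \<le> hh t (2*K)"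
    using K1 K2 rst by (intro hh_mono_gen) auto
  have "real (2*K) * \<bar>t\<bar> \<le> real rs * \<bar>t\<bar>" using K2 by (intro mult_right_mono) auto
  hence rst2: "real (2*K) * \<bar>t\<bar> \<le> 2 * pi" using rst by linarith
  have h1: "hh t (2*K) \<le> hh t K"
    using K1 rst2 by (intro hh_mono_gen) auto
  have wpos: "0 < w rs" by (rule w_pos)
  show ?thesis
  proof (cases "real rs * \<bar>t\<bar> \<le> 1/2")
    case True
    have a: "\<bar>real rs * t\<bar> \<le> 1/2" using True by (simp add: abs_mult)
    have "(t^2/2) * (1 - (real rs * t)^2/24)^2 \<le> hh t rs"
      using rs3 a by (intro hh_lower) auto
    moreover have "(12/25) * t^2 \<le> (t^2/2) * (1 - (real rs * t)^2/24)^2"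
    proof -
      have "\<bar>real rs * t\<bar>^2 \<le> (1/2)^2" using a by (intro power_mono) auto
      hence "(real rs * t)^2 \<le> 1/4" by (simp add: power_divide)
      hence "95/96 \<le> 1 - (real rs * t)^2/24" by linarith
      hence "(95/96)^2 \<le> (1 - (real rs * t)^2/24)^2" by (intro power_mono) auto
      hence a1: "(t^2/2) * (95/96)^2 \<le> (t^2/2) * (1 - (real rs * t)^2/24)^2" by (intro mult_left_mono) auto
      have "(12/25::real) * t^2 \<le> ((1/2) * (95/96)^2) * t^2" by (intro mult_right_mono) (auto simp: power2_eq_square)
      also have "((1/2) * (95/96)^2) * t^2 = (t^2/2) * (95/96::real)^2" by simp
      finally show ?thesis using a1 by linarith
    qed
    ultimately have hb: "(12/25) * t^2 \<le> hh t rs" by linarith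
    have "0 \<le> real K * w rs * (hh t K - hh t rs)" using h1 h2 wpos by simp
    moreover have "20 * ((12/25) * t^2) \<le> balance r rs * hh t rs"
      using bal hb by (intro mult_mono) auto
    ultimately show ?thesis using X zero_le_power2[of t] by linarith
  next
    case False
    define x where "x = real K * t"
    have xabs: "\<bar>x\<bar> = real K * \<bar>t\<bar>" by (simp add: x_def abs_mult)
    have x6: "1/6 \<le> \<bar>x\<bar>"
    proof -
      have "real rs * \<bar>t\<bar> \<le> (3 * real K) * \<bar>t\<bar>" using K3 by (intro mult_right_mono) auto
      thus ?thesis using False xabs by simp
    qed
    have x4: "\<bar>x\<bar> \<le> 4"
    proof -
      have "2 * \<bar>x\<bar> \<le> 2 * pi" using rst2 xabs by simp
      thus ?thesis using pi_less_4 by simp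
    qed
    have c1: "(x^2/2) * (1 - x^2/24)^2 \<le> 1 - cos x" using x4 by (rule one_minus_cos_lower)
    have "\<bar>x\<bar>^2 \<le> 4^2" using x4 by (intro power_mono) auto
    hence xsq: "x^2 \<le> 16" by simp
    have "1/3 \<le> 1 - x^2/24" using xsq by simp
    hence "(1/3)^2 \<le> (1 - x^2/24)^2" by (intro power_mono) auto
    hence "(x^2/2) * (1/3)^2 \<le> (x^2/2) * (1 - x^2/24)^2" by (intro mult_left_mono) auto
    hence c1b: "(x^2/2) * (1/3)^2 \<le> 1 - cos x" using c1 by linarith
    have "(x^2/2) * (1/3)^2 = x^2/18" by (simp add: power2_eq_square)
    hence c2: "x^2/18 \<le> 1 - cos x" using c1b by linarith
    have x36: "1/36 \<le> x^2"
    proof -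
      have "(1/6)^2 \<le> \<bar>x\<bar>^2" using x6 by (intro power_mono) auto
      thus ?thesis by (simp add: power_divide)
    qed
    have "(x^2/18)^2 \<le> (1 - cos x)^2" using c2 by (intro power_mono) auto
    hence "(x^2/18)^2 / (2 * (real K)^2) \<le> (1 - cos x)^2 / (2 * (real K)^2)"
      by (intro divide_right_mono) auto
    also have "\<dots> = hh t K - hh t (2*K)" using hh_double[OF K1, of t] by (simp add: x_def)
    finally have d1: "(x^2/18)^2 / (2 * (real K)^2) \<le> hh t K - hh t (2*K)" .
    have "(x^2/18)^2 / (2 * (real K)^2) = x^2 * t^2 / 648"
      using K1 by (simp add: x_def power_mult_distrib field_simps power2_eq_square)
    also have "\<dots> \<ge> t^2 / 23328"
    proof -
      have "(1/36) * t^2 \<le> x^2 * t^2" using x36 by (intro mult_right_mono) auto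
      thus ?thesis by simp
    qed
    finally have d2: "t^2 / 23328 \<le> hh t K - hh t rs" using d1 h2 by simp
    have Kw: "10^6/3 \<le> real K * w rs"
    proof -
      have "real rs * w rs \<le> (3 * real K) * w rs" using K3 wpos by (intro mult_right_mono) auto
      thus ?thesis using big by simp
    qed
    have "(10^6/3) * (t^2 / 23328) \<le> real K * w rs * (hh t K - hh t rs)"
      using Kw d2 by (intro mult_mono) auto
    moreover have "0 \<le> balance r rs * hh t rs" using bal hh_nonneg[of t rs] by simp
    moreover have "7 * t^2 \<le> (10^6/3) * (t^2 / 23328)" by simp
    ultimately show ?thesis using X by linarith
  qed
qed



lemma split_sum: fixes f :: "nat \<Rightarrow> real" and rs r :: nat assumes "rs \<le> r" shows "(\<Sum>j=1..r. f j) = (\<Sum>j=1..rs. f j) + (\<Sum>j=rs+1..r. (f j :: real))"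
  using assms sum.ub_add_nat[of 1 rs f "r - rs"] by simp

lemma w_le1: "1 \<le> j \<Longrightarrow> w j \<le> 1" using w_le[of j] by simp

lemma neg_tail: assumes "1 \<le> rs" "rs \<le> r" shows "(\<Sum>j=rs+1..r. w j / (real j)^2) \<le> 1 / real rs"
proof -
  have "(\<Sum>j=rs+1..r. w j / (real j)^2) \<le> (\<Sum>j=rs+1..r. 1 / (real j)^2)"
    using assms by (intro sum_mono divide_right_mono w_le1) auto
  also have "\<dots> \<le> 1 / real rs - 1 / real r" using assms by (intro inv_sq_tail) auto
  also have "\<dots> \<le> 1 / real rs" by simp
  finally show ?thesis .
qed

lemma I_bound: "\<bar>\<Sum>j=1..r. cc rs j * sin (real j * t)\<bar> \<le> 39/16 * \<bar>t\<bar>"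
proof -
  have "\<bar>\<Sum>j=1..r. cc rs j * sin (real j * t)\<bar> \<le> (\<Sum>j=1..r. \<bar>cc rs j * sin (real j * t)\<bar>)"
    by (rule sum_abs)
  also have "\<dots> \<le> (\<Sum>j=1..r. (w j / real j) * \<bar>t\<bar>)"
  proof (rule sum_mono)
    fix j assume j: "j \<in> {1..r}"
    have a: "\<bar>cc rs j\<bar> = w j / (real j)^2"
      using w_pos[of j] by (simp add: cc_def eps_def abs_mult)
    have b: "\<bar>sin (real j * t)\<bar> \<le> real j * \<bar>t\<bar>"
      using abs_sin_x_le_abs_x[of "real j * t"] by (simp add: abs_mult)
    have "\<bar>cc rs j * sin (real j * t)\<bar> \<le> (w j / (real j)^2) * (real j * \<bar>t\<bar>)"
      unfolding abs_mult a using b w_pos[of j] by (intro mult_left_mono) auto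
    also have "\<dots> = (w j / real j) * \<bar>t\<bar>" using j by (simp add: power2_eq_square)
    finally show "\<bar>cc rs j * sin (real j * t)\<bar> \<le> (w j / real j) * \<bar>t\<bar>" .
  qed
  also have "\<dots> = (\<Sum>j=1..r. w j / real j) * \<bar>t\<bar>" by (simp add: sum_distrib_right)
  also have "\<dots> \<le> 39/16 * \<bar>t\<bar>" using M_bound[of r] by (intro mult_right_mono) auto
  finally show ?thesis .
qed

lemma kappa_bound:
  assumes "1000 \<le> rs" "rs \<le> r" "\<bar>t\<bar> \<le> 1/100"
  shows "22/25 \<le> (\<Sum>j=1..r. cc rs j * (1 + cos (real j * t)))"
proof -
  have s1: "(\<Sum>j=1..r. cc rs j * (1 + cos (real j * t))) =
     (\<Sum>j=1..rs. cc rs j * (1 + cos (real j * t))) + (\<Sum>j=rs+1..r. cc rs j * (1 + cos (real j * t)))"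
    using assms by (intro split_sum) auto
  have s2: "(\<Sum>j=1..rs. cc rs j * (1 + cos (real j * t))) = cc rs 1 * (1 + cos t) + (\<Sum>j=2..rs. cc rs j * (1 + cos (real j * t)))"
    using assms by (subst sum.atLeast_Suc_atMost) (auto simp: numeral_2_eq_2)
  have cm: "\<And>x::real. 0 \<le> 1 + cos x" using cos_ge_minus_one by (metis add.commute le_add_same_cancel1 le_minus_iff minus_add_cancel)
  have p: "0 \<le> (\<Sum>j=2..rs. cc rs j * (1 + cos (real j * t)))"
    using w_pos cm by (intro sum_nonneg mult_nonneg_nonneg) (auto simp: cc_def eps_def intro: less_imp_le)
  have c1: "cc rs 1 = w 1" using assms by (simp add: cc_def eps_def)
  have ct: "1 - t^2/2 \<le> cos t" using one_minus_cos_upper[of t] by linarith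
  have t2: "t^2 \<le> 1/10000"
  proof -
    have "\<bar>t\<bar>^2 \<le> (1/100)^2" using assms by (intro power_mono) auto
    thus ?thesis by (simp add: power_divide)
  qed
  have "(4/9) * (2 - 1/20000) \<le> w 1 * (1 + cos t)"
    using w1_bounds ct t2 by (intro mult_mono) auto
  moreover have "(8888/10000::real) \<le> (4/9) * (2 - 1/20000)" by simp
  ultimately have "8888/10000 \<le> w 1 * (1 + cos t)" by linarith
  hence q: "8888/10000 \<le> cc rs 1 * (1 + cos t)" using c1 by simp
  have "(\<Sum>j=rs+1..r. - (2 * (w j / (real j)^2))) \<le> (\<Sum>j=rs+1..r. cc rs j * (1 + cos (real j * t)))"
  proof (rule sum_mono)
    fix j assume "j \<in> {rs+1..r}"
    hence "cc rs j = - (w j / (real j)^2)" by (simp add: cc_def eps_def)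
    moreover have "1 + cos (real j * t) \<le> 2" by simp
    moreover have "0 \<le> w j / (real j)^2" using w_pos[of j] by simp
    ultimately have "(w j / (real j)^2) * (1 + cos (real j * t)) \<le> (w j / (real j)^2) * 2"
      by (intro mult_left_mono) auto
    thus "- (2 * (w j / (real j)^2)) \<le> cc rs j * (1 + cos (real j * t))"
      using \<open>cc rs j = - (w j / (real j)^2)\<close> by simp
  qed
  moreover have "(\<Sum>j=rs+1..r. - (2 * (w j / (real j)^2))) = - 2 * (\<Sum>j=rs+1..r. w j / (real j)^2)"
    by (simp add: sum_negf sum_distrib_left)
  moreover have "(\<Sum>j=rs+1..r. w j / (real j)^2) \<le> 1 / real rs" using assms by (intro neg_tail) auto
  moreover have "1 / real rs \<le> 1/1000" using assms by (simp add: field_simps)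
  ultimately have n: "- (2/1000) \<le> (\<Sum>j=rs+1..r. cc rs j * (1 + cos (real j * t)))" by linarith
  show ?thesis using s1 s2 p q n by linarith
qed

lemma combine:
  fixes S Cs Sn t :: real
  assumes "7 * t^2 \<le> S - Cs" "22/25 \<le> S + Cs" "\<bar>Sn\<bar> \<le> 39/16 * \<bar>t\<bar>"
  shows "Cs^2 + Sn^2 \<le> S^2"
proof -
  have "Sn^2 \<le> (39/16 * \<bar>t\<bar>)^2" using assms(3) by (metis abs_ge_zero abs_le_square_iff abs_of_nonneg mult_nonneg_nonneg zero_le_divide_iff zero_le_numeral)
  also have "\<dots> = (39/16)^2 * \<bar>t\<bar>^2" by (simp only: power_mult_distrib)
  also have "\<dots> = (1521/256) * t^2" by (simp add: power2_eq_square)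
  also have "\<dots> \<le> (7 * t^2) * (22/25)" by simp
  also have "\<dots> \<le> (S - Cs) * (S + Cs)"
  proof (rule mult_mono)
    show "0 \<le> S - Cs" using assms(1) zero_le_power2[of t] by linarith
  qed (use assms in auto)
  also have "\<dots> = S^2 - Cs^2" by (simp add: power2_eq_square algebra_simps)
  finally show ?thesis by simp
qed



lemma pi_ge314: "157/50 \<le> pi" using pi_approx(1) by simp

lemma ln_sq_le: fixes y :: real assumes "1 \<le> y" shows "(ln y)^2 \<le> 16 * sqrt y"
proof -
  define s where "s = sqrt (sqrt y)"
  have s1: "1 \<le> s" using assms by (simp add: s_def)
  have s2: "s^2 = sqrt y" using assms by (simp add: s_def)
  have ys: "y = s^4"
  proof -
    have "s^4 = (s^2)^2" by (simp flip: power_mult)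
    also have "\<dots> = y" using assms s2 by simp
    finally show ?thesis by simp
  qed
  have "ln y = 4 * ln s" using s1 unfolding ys by (simp add: ln_realpow)
  moreover have "ln s \<le> s - 1" using s1 by (intro ln_le_minus_one) auto
  moreover have "0 \<le> ln s" using s1 by simp
  ultimately have a: "0 \<le> ln y" "ln y \<le> 4 * s" by auto
  have "(ln y)^2 \<le> (4 * s)^2" using a by (intro power_mono) auto
  also have "(4 * s)^2 = 16 * sqrt y" using assms by (simp add: s_def power_mult_distrib)
  finally show ?thesis .
qed

lemma floor_facts: fixes x :: real assumes "0 \<le> x"
  shows "real (nat \<lfloor>x\<rfloor>) \<le> x" "x - 1 < real (nat \<lfloor>x\<rfloor>)"
  using assms by (auto simp: of_nat_nat)

lemma regimeB:
  assumes rs1: "1 \<le> rs" and rsr: "rs \<le> r" and r3: "r \<le> 3*rs" and r100: "100 \<le> r"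
    and tr: "2 * pi \<le> real (Suc r) * \<bar>t\<bar>" and ts: "\<bar>t\<bar> \<le> 1/10^7"
  shows "7 * t^2 \<le> (\<Sum>j=1..r. cc rs j * (1 - cos (real j * t)))"
proof -
  define u where "u = \<bar>t\<bar>"
  have "t \<noteq> 0"
  proof
    assume "t = 0" hence "2 * pi \<le> 0" using tr by simp
    thus False using pi_gt_zero by linarith
  qed
  hence u0: "0 < u" by (simp add: u_def)
  have us: "u \<le> 1/10^7" using ts by (simp add: u_def)
  have tu: "t^2 = u^2" by (simp add: u_def)
  define J1 where "J1 = nat \<lfloor>1/u\<rfloor>"
  define J2 where "J2 = nat \<lfloor>2/u\<rfloor>"
  have J1a: "real J1 \<le> 1/u" "1/u - 1 < real J1" unfolding J1_def using u0 by (intro floor_facts; simp)+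
  have J2a: "real J2 \<le> 2/u" "2/u - 1 < real J2" unfolding J2_def using u0 by (intro floor_facts; simp)+
  have big: "10000000 \<le> 1/u" using us u0 by (simp add: field_simps)
  have "1 \<le> real J1" using J1a big by linarith
  hence J11: "1 \<le> J1" by simp
  have J12: "J1 \<le> J2" using J1a J2a u0 by (simp add: J1_def J2_def floor_mono nat_mono divide_right_mono)
  have J2rs: "J2 \<le> rs"
  proof -
    have "2 / u \<le> real (Suc r) / pi" using tr u0 pi_gt_zero by (simp add: u_def field_simps)
    also have "\<dots> \<le> real (Suc r) / (157/50)" using pi_ge314 by (intro divide_left_mono) auto
    also have "\<dots> \<le> real r / 3" using r100 by simp
    also have "\<dots> \<le> real rs" using r3 by simp
    finally show ?thesis using J2a by linarith
  qed
  have R: "(\<Sum>j=1..r. cc rs j * (1 - cos (real j * t))) = (\<Sum>j=1..rs. w j * hh t j) - (\<Sum>j=rs+1..r. w j * hh t j)"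
  proof -
    have "(\<Sum>j=1..r. cc rs j * (1 - cos (real j * t))) = (\<Sum>j=1..rs. eps rs j * w j * hh t j) + (\<Sum>j=rs+1..r. eps rs j * w j * hh t j)"
      unfolding R_eq using rsr by (intro split_sum) 
    also have "(\<Sum>j=1..rs. eps rs j * w j * hh t j) = (\<Sum>j=1..rs. w j * hh t j)"
      by (intro sum.cong) (auto simp: eps_def)
    also have "(\<Sum>j=rs+1..r. eps rs j * w j * hh t j) = - (\<Sum>j=rs+1..r. w j * hh t j)"
      by (simp add: sum_negf[symmetric] eps_def)
    finally show ?thesis by simp
  qed
  have neg: "(\<Sum>j=rs+1..r. w j * hh t j) \<le> 2 * w J2 * (3 / real r - 1 / real r)"
  proof -
    have "(\<Sum>j=rs+1..r. w j * hh t j) \<le> (\<Sum>j=rs+1..r. w J2 * (2 * (1 / (real j)^2)))"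
    proof (rule sum_mono)
      fix j assume j: "j \<in> {rs+1..r}"
      have "w j \<le> w J2" using j J2rs by (intro w_anti) auto
      moreover have "hh t j \<le> 2 * (1 / (real j)^2)"
      proof -
        have "1 - cos (real j * t) \<le> 2" using cos_ge_minus_one[of "real j * t"] by linarith
        thus ?thesis unfolding hh_def by (simp add: divide_right_mono)
      qed
      ultimately show "w j * hh t j \<le> w J2 * (2 * (1 / (real j)^2))"
        using w_pos[of j] hh_nonneg[of t j] by (intro mult_mono) auto
    qed
    also have "\<dots> = 2 * w J2 * (\<Sum>j=rs+1..r. 1 / (real j)^2)" by (simp add: sum_distrib_left mult.commute)
    also have "(\<Sum>j=rs+1..r. 1 / (real j)^2) \<le> 1 / real rs - 1 / real r" using rs1 rsr by (intro inv_sq_tail)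
    also have "1 / real rs \<le> 3 / real r"
    proof -
      have "real r \<le> 3 * real rs" using r3 by simp
      hence "3 / (3 * real rs) \<le> 3 / real r" using r100 by (intro divide_left_mono) auto
      thus ?thesis by simp
    qed
    finally show ?thesis using w_pos[of J2] by (simp add: mult_left_mono)
  qed
  have negb: "2 * (3 / real r - 1 / real r) \<le> (65/100) * u"
  proof -
    have "1 / real (Suc r) \<le> u / (2 * pi)" using tr u0 by (simp add: u_def field_simps)
    also have "\<dots> \<le> u / (2 * (157/50))" using pi_ge314 u0 by (intro divide_left_mono) auto
    also have "\<dots> = (25/157) * u" by simp
    finally have a: "1 / real (Suc r) \<le> (25/157) * u" .
    have "1 / real r \<le> (101/100) * (1 / real (Suc r))" using r100 by (simp add: field_simps)
    hence b: "1 / real r \<le> (101/100) * ((25/157) * u)" using a by linarith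
    have e: "2 * (3 / real r - 1 / real r) = 4 * (1 / real r)" by simp
    show ?thesis unfolding e using b u0 by linarith
  qed
  have pos1: "(\<Sum>j=1..J2. w j * hh t j) \<le> (\<Sum>j=1..rs. w j * hh t j)"
    using J2rs w_pos hh_nonneg by (intro sum_mono2) (auto intro: mult_nonneg_nonneg less_imp_le)
  have pos2: "w J2 * (\<Sum>j=1..J2. hh t j) \<le> (\<Sum>j=1..J2. w j * hh t j)"
    unfolding sum_distrib_left using hh_nonneg by (intro sum_mono mult_right_mono w_anti) auto
  have hlow: "c * t^2 \<le> hh t j" if "1 \<le> j" "real j * u \<le> a" "a \<le> 4" "c \<le> (1/2) * (1 - a^2/24)^2" "0 \<le> c" for j a c
  proof -
    have ja: "\<bar>real j * t\<bar> \<le> a" using that by (simp add: u_def abs_mult)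
    have H: "(t^2/2) * (1 - (real j * t)^2/24)^2 \<le> hh t j" using that ja by (intro hh_lower) auto
    have "(1 - a^2/24) \<le> (1 - (real j * t)^2/24)"
    proof -
      have "\<bar>real j * t\<bar>^2 \<le> a^2" using ja by (intro power_mono) auto
      thus ?thesis by simp
    qed
    moreover have "0 \<le> 1 - a^2/24"
    proof -
      have a0: "0 \<le> a" using ja by linarith
      have "a^2 \<le> 4^2" using that a0 by (intro power_mono) auto
      thus ?thesis by simp
    qed
    ultimately have Q: "(1 - a^2/24)^2 \<le> (1 - (real j * t)^2/24)^2" by (intro power_mono) auto
    have "c * t^2 \<le> ((1/2) * (1 - a^2/24)^2) * t^2" using that by (intro mult_right_mono) auto
    also have "\<dots> \<le> ((1/2) * (1 - (real j * t)^2/24)^2) * t^2" using Q by (intro mult_right_mono) auto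
    also have "\<dots> = (t^2/2) * (1 - (real j * t)^2/24)^2" by simp
    finally show ?thesis using H by linarith
  qed
  have s1: "(\<Sum>j=1..J1. (9/20) * t^2) \<le> (\<Sum>j=1..J1. hh t j)"
  proof (rule sum_mono)
    fix j assume j: "j \<in> {1..J1}"
    have "real j * u \<le> real J1 * u" using j u0 by (intro mult_right_mono) auto
    also have "\<dots> \<le> 1" using J1a u0 by (simp add: field_simps)
    finally show "(9/20) * t^2 \<le> hh t j" using j by (intro hlow[where a=1]) (auto simp: power2_eq_square)
  qed
  have s2: "(\<Sum>j=J1+1..J2. (17/50) * t^2) \<le> (\<Sum>j=J1+1..J2. hh t j)"
  proof (rule sum_mono)
    fix j assume j: "j \<in> {J1+1..J2}"
    have "real j * u \<le> real J2 * u" using j u0 by (intro mult_right_mono) auto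
    also have "\<dots> \<le> 2" using J2a u0 by (simp add: field_simps)
    finally show "(17/50) * t^2 \<le> hh t j" using j by (intro hlow[where a=2]) (auto simp: power2_eq_square)
  qed
  have ssplit: "(\<Sum>j=1..J2. hh t j) = (\<Sum>j=1..J1. hh t j) + (\<Sum>j=J1+1..J2. hh t j)"
    using J12 by (intro split_sum)
  have cnt: "(\<Sum>j=1..J1. (9/20) * t^2) + (\<Sum>j=J1+1..J2. (17/50) * t^2) = ((9/20) * real J1 + (17/50) * (real J2 - real J1)) * u^2"
    using J12 tu by (simp add: of_nat_diff algebra_simps)
  have lin: "(79/100) * u - (45/100) * u^2 \<le> ((9/20) * real J1 + (17/50) * (real J2 - real J1)) * u^2"
  proof -
    have "(79/100) / u - 45/100 \<le> (9/20) * real J1 + (17/50) * (real J2 - real J1)"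
      using J1a J2a by (simp add: field_simps)
    hence "((79/100) / u - 45/100) * u^2 \<le> ((9/20) * real J1 + (17/50) * (real J2 - real J1)) * u^2"
      by (intro mult_right_mono) auto
    moreover have "((79/100) / u - 45/100) * u^2 = (79/100) * u - (45/100) * u^2"
      using u0 by (simp add: power2_eq_square field_simps)
    ultimately show ?thesis by linarith
  qed
  have sumhh: "(79/100) * u - (45/100) * u^2 \<le> (\<Sum>j=1..J2. hh t j)"
    using s1 s2 ssplit cnt lin by linarith
  have wJ2: "70 * u \<le> w J2"
  proof -
    define y where "y = 2/u + 3"
    have y1: "1 \<le> y" using u0 by (simp add: y_def)
    have "ln (real J2 + 3) \<le> ln y" using J2a u0 by (subst ln_le_cancel_iff) (auto simp: y_def)
    moreover have "0 \<le> ln (real J2 + 3)" by simp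
    ultimately have "(ln (real J2 + 3))^2 \<le> (ln y)^2" by (intro power_mono) auto
    also have "\<dots> \<le> 16 * sqrt y" using y1 by (rule ln_sq_le)
    finally have l: "(ln (real J2 + 3))^2 \<le> 16 * sqrt y" .
    have "(1120 * u)^2 * y = 1254400 * (2 * u + 3 * u^2)" using u0 by (simp add: y_def power2_eq_square field_simps)
    also have "\<dots> \<le> 1"
    proof -
      have "u * u \<le> 1 * u" using u0 us by (intro mult_right_mono) auto
      hence "u^2 \<le> u" by (simp add: power2_eq_square)
      thus ?thesis using us by simp
    qed
    finally have "(1120 * u)^2 * y \<le> 1" .
    hence "sqrt ((1120 * u)^2 * y) \<le> 1" by simp
    hence "1120 * u * sqrt y \<le> 1" using u0 by (simp add: real_sqrt_mult)
    hence "(70 * u) * (16 * sqrt y) \<le> 1" by simp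
    moreover have "(70 * u) * (ln (real J2 + 3))^2 \<le> (70 * u) * (16 * sqrt y)" using l u0 by (intro mult_left_mono) auto
    ultimately have "(70 * u) * (ln (real J2 + 3))^2 \<le> 1" by linarith
    moreover have "0 < (ln (real J2 + 3))^2" by simp
    ultimately show ?thesis by (simp add: w_def field_simps)
  qed
  have P: "w J2 * ((79/100) * u - (45/100) * u^2) \<le> (\<Sum>j=1..rs. w j * hh t j)"
  proof -
    have "w J2 * ((79/100) * u - (45/100) * u^2) \<le> w J2 * (\<Sum>j=1..J2. hh t j)"
      using sumhh w_pos[of J2] by (intro mult_left_mono) auto
    thus ?thesis using pos1 pos2 by linarith
  qed
  have N: "(\<Sum>j=rs+1..r. w j * hh t j) \<le> w J2 * ((65/100) * u)"
  proof -
    have "w J2 * (2 * (3 / real r - 1 / real r)) \<le> w J2 * ((65/100) * u)"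
      using negb w_pos[of J2] by (intro mult_left_mono) auto
    moreover have "2 * w J2 * (3 / real r - 1 / real r) = w J2 * (2 * (3 / real r - 1 / real r))"
      by (simp only: mult_ac)
    ultimately show ?thesis using neg by linarith
  qed
  have "w J2 * ((1/10) * u) \<le> w J2 * ((79/100) * u - (45/100) * u^2) - w J2 * ((65/100) * u)"
  proof -
    have "u^2 \<le> (1/10000000) * u" using u0 us by (simp add: power2_eq_square mult_right_mono)
    hence "(1/10) * u \<le> ((79/100) * u - (45/100) * u^2) - (65/100) * u" using u0 by linarith
    hence "w J2 * ((1/10) * u) \<le> w J2 * (((79/100) * u - (45/100) * u^2) - (65/100) * u)"
      using w_pos[of J2] by (intro mult_left_mono) auto
    thus ?thesis by (simp add: algebra_simps)
  qed
  moreover have "7 * u^2 \<le> w J2 * ((1/10) * u)"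
  proof -
    have "(70 * u) * ((1/10) * u) \<le> w J2 * ((1/10) * u)" using wJ2 u0 by (intro mult_right_mono) auto
    thus ?thesis by (simp add: power2_eq_square)
  qed
  ultimately show ?thesis using R P N tu by linarith
qed



lemma cmod_two: fixes a b t :: real
  shows "(cmod (complex_of_real a + complex_of_real b * exp (\<i> * complex_of_real t)))^2 = a^2 + b^2 + 2*a*b*cos t"
proof -
  have re: "Re (complex_of_real a + complex_of_real b * exp (\<i> * complex_of_real t)) = a + b * cos t"
    by (simp add: Re_exp Im_exp)
  have im: "Im (complex_of_real a + complex_of_real b * exp (\<i> * complex_of_real t)) = b * sin t"
    by (simp add: Re_exp Im_exp)
  have "(cmod (complex_of_real a + complex_of_real b * exp (\<i> * complex_of_real t)))^2 = (a + b * cos t)^2 + (b * sin t)^2"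
    unfolding cmod_power2 re im by simp
  also have "\<dots> = a^2 + b^2 * ((sin t)^2 + (cos t)^2) + 2*a*b*cos t"
  proof -
    have "\<And>c s. (a + b * c)^2 + (b * s)^2 = a^2 + b^2 * (s^2 + c^2) + 2*a*b*c"
      by (simp add: power2_eq_square algebra_simps)
    thus ?thesis by blast
  qed
  also have "\<dots> = a^2 + b^2 + 2*a*b*cos t" by simp
  finally show ?thesis .
qed

lemma regimeC:
  assumes rs2: "2 \<le> rs" and rsr: "rs \<le> r" and bigrs: "10^17 \<le> real rs"
    and td: "1/10^7 \<le> \<bar>t\<bar>" and tp: "\<bar>t\<bar> \<le> pi"
  shows "cmod (\<Sum>j=1..r. complex_of_real (cc rs j) * exp (\<i> * complex_of_real t) ^ j) \<le> (\<Sum>j=1..r. cc rs j)"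
proof -
  define u where "u = exp (\<i> * complex_of_real t)"
  have nu: "cmod u = 1" by (simp add: u_def)
  define a where "a = cc rs 1"
  define b where "b = cc rs 2"
  have a_eq: "a = w 1" using rs2 by (simp add: a_def cc_def eps_def)
  have b_eq: "b = w 2 / 4" using rs2 by (simp add: b_def cc_def eps_def)
  have ab: "4/9 \<le> a" "a \<le> 9/16" "1/16 \<le> b" "b \<le> 9/64"
    using w1_bounds w2_lower w_le[of 2] a_eq b_eq by auto
  define f where "f j = complex_of_real (cc rs j) * u ^ j" for j
  have r2: "2 \<le> r" using rs2 rsr by simp
  have sp: "(\<Sum>j=1..r. g j) = g 1 + g 2 + (\<Sum>j=3..r. g j)" for g :: "nat \<Rightarrow> 'a::comm_monoid_add"
  proof -
    have "(\<Sum>j=1..r. g j) = g 1 + (\<Sum>j=2..r. g j)" using r2 by (subst sum.atLeast_Suc_atMost) (auto simp: numeral_2_eq_2)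
    also have "(\<Sum>j=2..r. g j) = g 2 + (\<Sum>j=3..r. g j)" using r2 by (subst sum.atLeast_Suc_atMost) (auto simp: numeral_3_eq_3 numeral_2_eq_2)
    finally show ?thesis by (simp add: add.assoc)
  qed
  have T1: "cmod (\<Sum>j=1..r. f j) \<le> cmod (f 1 + f 2) + cmod (\<Sum>j=3..r. f j)"
    unfolding sp[of f] by (rule norm_triangle_ineq)
  have T2: "cmod (\<Sum>j=3..r. f j) \<le> (\<Sum>j=3..r. cmod (f j))" by (rule norm_sum)
  have T3: "(\<Sum>j=3..r. cmod (f j)) = (\<Sum>j=3..r. \<bar>cc rs j\<bar>)"
    by (intro sum.cong) (auto simp: f_def norm_mult norm_power nu)
  have T4: "f 1 + f 2 = u * (complex_of_real a + complex_of_real b * u)"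
    by (simp add: f_def a_def b_def power2_eq_square algebra_simps)
  have T5: "cmod (u * (complex_of_real a + complex_of_real b * u)) = cmod (complex_of_real a + complex_of_real b * u)"
    by (simp add: norm_mult nu)
  have T: "cmod (\<Sum>j=1..r. f j) \<le> cmod (complex_of_real a + complex_of_real b * u) + (\<Sum>j=3..r. \<bar>cc rs j\<bar>)"
    using T1[unfolded T4 T5] T2 T3 by linarith
  have absdiff: "(\<Sum>j=3..r. \<bar>cc rs j\<bar>) \<le> (\<Sum>j=3..r. cc rs j) + 2 / real rs"
  proof -
    have "(\<Sum>j=3..r. \<bar>cc rs j\<bar> - cc rs j) = (\<Sum>j=3..r. if j \<in> {rs+1..r} then 2 * (w j / (real j)^2) else 0)"
      by (intro sum.cong) (auto simp: cc_def eps_def abs_mult w_pos less_imp_le)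
    also have "\<dots> = (\<Sum>j\<in>{3..r} \<inter> {rs+1..r}. 2 * (w j / (real j)^2))"
      by (rule sum.inter_restrict[symmetric]) simp
    also have "{3..r} \<inter> {rs+1..r} = {rs+1..r}" using rs2 by auto
    also have "(\<Sum>j=rs+1..r. 2 * (w j / (real j)^2)) = 2 * (\<Sum>j=rs+1..r. w j / (real j)^2)"
      by (simp add: sum_distrib_left)
    also have "\<dots> \<le> 2 * (1 / real rs)" using rs2 rsr by (intro mult_left_mono neg_tail) auto
    finally have "(\<Sum>j=3..r. \<bar>cc rs j\<bar> - cc rs j) \<le> 2 / real rs" by simp
    thus ?thesis by (simp add: sum_subtractf)
  qed
  have Sdec: "(\<Sum>j=1..r. cc rs j) = a + b + (\<Sum>j=3..r. cc rs j)" unfolding sp[of "cc rs"] a_def b_def by simp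
  define e where "e = 2 / real rs"
  have e0: "0 \<le> e" by (simp add: e_def)
  have ebig: "e \<le> 2 / 10^17"
    using bigrs by (simp add: e_def field_simps)
  have cosb: "1/(4 * 10^14) \<le> 1 - cos t"
  proof -
    define d :: real where "d = 1/10^7"
    have "cos \<bar>t\<bar> \<le> cos d" using td tp by (intro cos_monotone_0_pi_le) (auto simp: d_def)
    hence c1: "1 - cos d \<le> 1 - cos t" by simp
    have "(d^2/2) * (1 - d^2/24)^2 \<le> 1 - cos d" by (intro one_minus_cos_lower) (simp add: d_def)
    moreover have "1/(4 * 10^14) \<le> (d^2/2) * (1 - d^2/24)^2" by (simp add: d_def power2_eq_square)
    ultimately show ?thesis using c1 by linarith
  qed
  have ab2: "1/18 \<le> 2 * a * b"
  proof -
    have "(4/9) * (1/16) \<le> a * b" using ab by (intro mult_mono) auto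
    thus ?thesis by simp
  qed
  have key: "2 * e * (a + b) \<le> 2 * a * b * (1 - cos t)"
  proof -
    have "(1/18) * (1/(4 * 10^14)) \<le> 2 * a * b * (1 - cos t)"
      using ab2 cosb by (intro mult_mono) auto
    moreover have "2 * e * (a + b) \<le> 2 * (2 / 10^17) * 1"
      using ab ebig e0 by (intro mult_mono) auto
    ultimately show ?thesis by simp
  qed
  have nn: "0 \<le> a + b - e" using ab ebig by simp
  have "(cmod (complex_of_real a + complex_of_real b * u))^2 = a^2 + b^2 + 2*a*b*cos t"
    unfolding u_def by (rule cmod_two)
  also have "\<dots> \<le> (a + b - e)^2"
  proof -
    have E1: "(a+b-e)^2 = a^2 + b^2 + 2*a*b - 2*e*(a+b) + e^2" by (simp add: power2_eq_square algebra_simps)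
    have E2: "a^2 + b^2 + 2*a*b*cos t = a^2 + b^2 + 2*a*b - 2*a*b*(1 - cos t)" by (simp add: algebra_simps)
    show ?thesis unfolding E1 E2 using key zero_le_power2[of e] by linarith
  qed
  finally have "cmod (complex_of_real a + complex_of_real b * u) \<le> a + b - e"
    using nn by (metis abs_le_square_iff abs_of_nonneg norm_ge_zero)
  hence "cmod (\<Sum>j=1..r. f j) \<le> (\<Sum>j=1..r. cc rs j)"
    using T absdiff Sdec by (simp add: e_def)
  thus ?thesis by (simp add: f_def u_def)
qed



lemma div_lt1_aux: fixes a b :: real shows "a / b < 1 \<Longrightarrow> 0 < b \<Longrightarrow> a < b"
  by (simp add: divide_less_eq_1_pos)

lemma AS1: "\<exists>N::real. \<forall>x\<ge>N. x powr (4/5) + 1 + (x/3)/((4/5)*ln x)^2 < (2*x/3)/(ln(x+3))^2"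
proof -
  have lim: "((\<lambda>x::real. (x powr (4/5) + 1 + (x/3)/((4/5)*ln x)^2) / ((2*x/3)/(ln(x+3))^2)) \<longlongrightarrow> inverse ((4/5)^2) / 2) at_top"
    by real_asymp
  have "inverse ((4/5::real)^2) / 2 < 1" by (simp add: power2_eq_square inverse_eq_divide)
  with lim have ev1: "eventually (\<lambda>x::real. (x powr (4/5) + 1 + (x/3)/((4/5)*ln x)^2) / ((2*x/3)/(ln(x+3))^2) < 1) at_top"
    by (rule order_tendstoD(2))
  have ev2: "eventually (\<lambda>x::real. 0 < (2*x/3)/(ln(x+3))^2) at_top" by real_asymp
  have "eventually (\<lambda>x::real. x powr (4/5) + 1 + (x/3)/((4/5)*ln x)^2 < (2*x/3)/(ln(x+3))^2) at_top"
    using ev1 ev2 by eventually_elim (rule div_lt1_aux)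
  thus ?thesis by (simp add: eventually_at_top_linorder)
qed

lemma AS2: "\<exists>N::real. \<forall>x\<ge>N. B \<le> x / (ln (x+3))^2"
proof -
  have "eventually (\<lambda>x::real. B \<le> x / (ln (x+3))^2) at_top" by real_asymp
  thus ?thesis by (simp add: eventually_at_top_linorder)
qed

lemma AS3: "filterlim (\<lambda>n::nat. (real n powr (-2/5)) powr (-1/2)) at_top sequentially"
  by real_asymp




lemma rs_third: "\<exists>N::nat. \<forall>r rs. N \<le> r \<longrightarrow> rs \<le> r \<longrightarrow> 0 < balance r rs \<longrightarrow> r \<le> 3*rs"
proof -
  obtain N0 :: real where N0: "\<forall>x::real\<ge>N0. x powr (4/5) + 1 + (x/3)/((4/5)*ln x)^2 < (2*x/3)/(ln(x+3))^2"
    using AS1 by blast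
  define N where "N = max 2 (nat \<lceil>N0\<rceil>)"
  have "\<forall>r rs. N \<le> r \<longrightarrow> rs \<le> r \<longrightarrow> 0 < balance r rs \<longrightarrow> r \<le> 3*rs"
  proof (intro allI impI)
    fix r rs assume Nr: "N \<le> r" and rsr: "rs \<le> r" and bpos: "0 < balance r rs"
    show "r \<le> 3*rs"
    proof (rule ccontr)
      assume "\<not> r \<le> 3*rs"
      hence r3: "3*rs < r" by simp
      define x where "x = real r"
      have x2: "2 \<le> x" using Nr by (simp add: N_def x_def)
      have xN: "N0 \<le> x" using Nr by (simp add: N_def x_def; linarith?)
      define A where "A = nat \<lceil>x powr (4/5)\<rceil>"
      have A1: "x powr (4/5) \<le> real A" by (simp add: A_def; linarith?)
      have A2: "real A \<le> x powr (4/5) + 1" by (simp add: A_def; linarith?)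
      have lx: "0 < ln x" using x2 by simp
      have wA: "w (A+1) \<le> 1 / ((4/5) * ln x)^2"
      proof -
        have xp: "0 < x powr (4/5)" using x2 by simp
        have "ln (x powr (4/5)) \<le> ln (real (A+1) + 3)" using A1 xp by (subst ln_le_cancel_iff) auto
        moreover have "ln (x powr (4/5)) = (4/5) * ln x" using x2 by (simp add: ln_powr)
        ultimately have l: "(4/5) * ln x \<le> ln (real (A+1) + 3)" by simp
        have "((4/5) * ln x)^2 \<le> (ln (real (A+1) + 3))^2" using l lx by (intro power_mono) auto
        moreover have "0 < ((4/5) * ln x)^2" using lx by simp
        ultimately show ?thesis unfolding w_def by (intro divide_left_mono) auto
      qed
      have S1: "(\<Sum>j=1..rs. w j) \<le> real A + real rs * w (A+1)"
      proof -
        have "(\<Sum>j=1..rs. w j) \<le> (\<Sum>j=1..rs. (if j \<in> {..A} then 1 else 0) + w (A+1))"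
        proof (rule sum_mono)
          fix j assume j: "j \<in> {1..rs}"
          show "w j \<le> (if j \<in> {..A} then 1 else 0) + w (A+1)"
          proof (cases "j \<le> A")
            case True thus ?thesis using w_le1[of j] w_pos[of "A+1"] j by auto
          next
            case False thus ?thesis using w_anti[of "A+1" j] by auto
          qed
        qed
        also have "\<dots> = (\<Sum>j=1..rs. (if j \<in> {..A} then 1 else 0)) + real rs * w (A+1)"
          by (simp add: sum.distrib)
        also have "(\<Sum>j=1..rs. (if j \<in> {..A} then 1 else 0)) = (\<Sum>j\<in>{1..rs} \<inter> {..A}. (1::real))"
          by (rule sum.inter_restrict[symmetric]) simp
        also have "\<dots> = real (card ({1..rs} \<inter> {..A}))" by simp
        also have "card ({1..rs} \<inter> {..A}) \<le> card {1..A}" by (intro card_mono) auto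
        hence "real (card ({1..rs} \<inter> {..A})) \<le> real A" by simp
        finally show ?thesis by simp
      qed
      have rsx: "real rs \<le> x/3" using r3 by (simp add: x_def)
      have "real rs * w (A+1) \<le> (x/3) * (1 / ((4/5) * ln x)^2)"
        using rsx wA w_pos[of "A+1"] by (intro mult_mono) auto
      hence S1': "(\<Sum>j=1..rs. w j) \<le> x powr (4/5) + 1 + (x/3)/((4/5)*ln x)^2"
        using S1 A2 by simp
      have "(\<Sum>j=rs+1..r. w r) \<le> (\<Sum>j=rs+1..r. w j)" by (intro sum_mono w_anti) auto
      moreover have "(\<Sum>j=rs+1..r. w r) = real (r - rs) * w r" by simp
      moreover have "(2*x/3) \<le> real (r - rs)" using r3 rsr by (simp add: x_def of_nat_diff)
      ultimately have "(2*x/3) * w r \<le> (\<Sum>j=rs+1..r. w j)"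
      proof -
        have "(2*x/3) * w r \<le> real (r - rs) * w r"
          using \<open>(2*x/3) \<le> real (r - rs)\<close> w_pos[of r] by (intro mult_right_mono) auto
        thus ?thesis using \<open>(\<Sum>j=rs+1..r. w r) \<le> (\<Sum>j=rs+1..r. w j)\<close> \<open>(\<Sum>j=rs+1..r. w r) = real (r - rs) * w r\<close> by linarith
      qed
      hence S2: "(2*x/3)/(ln(x+3))^2 \<le> (\<Sum>j=rs+1..r. w j)" by (simp add: w_def x_def)
      have "x powr (4/5) + 1 + (x/3)/((4/5)*ln x)^2 < (2*x/3)/(ln(x+3))^2" using N0 xN by blast
      hence "balance r rs < 0" using S1' S2 balance_w[of r rs] by linarith
      thus False using bpos by simp
    qed
  qed
  thus ?thesis by blast
qed




lemma exp_pow_cis: "exp (\<i> * complex_of_real t) ^ j = cis (real j * t)"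
proof -
  have "exp (\<i> * complex_of_real t) ^ j = exp (of_nat j * (\<i> * complex_of_real t))"
    by (rule exp_of_nat_mult[symmetric])
  also have "\<dots> = cis (real j * t)" by (simp add: cis_conv_exp mult_ac)
  finally show ?thesis .
qed

lemma G_re: "Re (\<Sum>j=1..r. complex_of_real (c j) * exp (\<i> * complex_of_real t) ^ j) = (\<Sum>j=1..r. c j * cos (real j * t))"
  by (simp add: Re_sum exp_pow_cis)

lemma G_im: "Im (\<Sum>j=1..r. complex_of_real (c j) * exp (\<i> * complex_of_real t) ^ j) = (\<Sum>j=1..r. c j * sin (real j * t))"
  by (simp add: Im_sum exp_pow_cis)

lemma core:
  assumes rs3: "3 \<le> rs" and rsr: "rs \<le> r" and r3: "r \<le> 3*rs" and bal: "20 \<le> balance r rs"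
    and b1: "10^17 \<le> real rs" and b2: "10^6 \<le> real rs * w rs" and b3: "10^8 \<le> r" and tp: "\<bar>t\<bar> \<le> pi"
  shows "cmod (\<Sum>j=1..r. complex_of_real (cc rs j) * exp (\<i> * complex_of_real t) ^ j) \<le> (\<Sum>j=1..r. cc rs j)"
proof (cases "1/10^7 \<le> \<bar>t\<bar>")
  case True
  thus ?thesis using rs3 rsr b1 tp by (intro regimeC) auto
next
  case False
  hence ts: "\<bar>t\<bar> \<le> 1/10^7" by simp
  define S where "S = (\<Sum>j=1..r. cc rs j)"
  define Cs where "Cs = (\<Sum>j=1..r. cc rs j * cos (real j * t))"
  define Sn where "Sn = (\<Sum>j=1..r. cc rs j * sin (real j * t))"
  have R: "7 * t^2 \<le> (\<Sum>j=1..r. cc rs j * (1 - cos (real j * t)))"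
  proof (cases "real (Suc r) * \<bar>t\<bar> \<le> 2 * pi")
    case True thus ?thesis using rs3 rsr bal b2 by (intro regimeA) auto
  next
    case False thus ?thesis using rs3 rsr r3 b3 ts by (intro regimeB) auto
  qed
  have e1: "(\<Sum>j=1..r. cc rs j * (1 - cos (real j * t))) = S - Cs"
    by (simp add: S_def Cs_def algebra_simps sum_subtractf)
  have e2: "(\<Sum>j=1..r. cc rs j * (1 + cos (real j * t))) = S + Cs"
    by (simp add: S_def Cs_def algebra_simps sum.distrib)
  have K: "22/25 \<le> S + Cs" using kappa_bound[of rs r t] rs3 rsr b1 ts unfolding e2 by simp
  have I: "\<bar>Sn\<bar> \<le> 39/16 * \<bar>t\<bar>" unfolding Sn_def by (rule I_bound)
  have C: "Cs^2 + Sn^2 \<le> S^2" using R K I unfolding e1 by (intro combine)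
  have S0: "0 \<le> S" using R K unfolding e1 using zero_le_power2[of t] by linarith
  have "cmod (\<Sum>j=1..r. complex_of_real (cc rs j) * exp (\<i> * complex_of_real t) ^ j) = sqrt (Cs^2 + Sn^2)"
    unfolding cmod_def G_re G_im Cs_def Sn_def ..
  also have "\<dots> \<le> sqrt (S^2)" using C by (rule real_sqrt_le_mono)
  also have "\<dots> = S" using S0 by simp
  finally show ?thesis unfolding S_def .
qed

lemma lam_nonneg: "0 \<le> lam_a r"
  unfolding lam_a_def by (intro divide_nonneg_nonneg sum_nonneg) auto

lemma htilde_eq: "htilde lt rs r z = complex_of_real (lt * lam_a r) * (\<Sum>j=1..r. complex_of_real (cc rs j) * z ^ j)"
proof -
  have "(\<Sum>j=1..r. complex_of_real (eps rs j * d_coef r j) * z ^ j) = (\<Sum>j=1..r. complex_of_real (lam_a r) * (complex_of_real (cc rs j) * z ^ j))"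
  proof (rule sum.cong)
    fix j assume j: "j \<in> {1..r}"
    have "eps rs j * d_coef r j = lam_a r * cc rs j"
      using j by (simp add: d_coef_def cc_def w_def mult_ac)
    thus "complex_of_real (eps rs j * d_coef r j) * z ^ j = complex_of_real (lam_a r) * (complex_of_real (cc rs j) * z ^ j)"
      by simp
  qed simp
  also have "\<dots> = complex_of_real (lam_a r) * (\<Sum>j=1..r. complex_of_real (cc rs j) * z ^ j)"
    by (simp add: sum_distrib_left)
  finally show ?thesis unfolding htilde_def by simp
qed



theorem lemma6:
  shows "\<forall>\<^sub>F n in sequentially.
    \<forall>rs lt. rs \<in> {1..r_of n} \<and> balance (r_of n) rs \<in> {20..21}
       \<and> lt > 0 \<and> htilde lt rs (r_of n) 1 = 1 \<longrightarrow>
       (\<forall>t\<in>{-pi..pi}. cmod (htilde lt rs (r_of n) (exp (\<i> * complex_of_real t))) \<le> 1)"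
proof -
  obtain N3 where N3: "\<forall>r rs. N3 \<le> r \<longrightarrow> rs \<le> r \<longrightarrow> 0 < balance r rs \<longrightarrow> r \<le> 3*rs"
    using rs_third by blast
  obtain N1 :: real where N1: "\<forall>x\<ge>N1. (10^6::real) \<le> x / (ln (x+3))^2"
    using AS2 by blast
  define M where "M = max (nat \<lceil>N1\<rceil>) (10^17)"
  define R0 where "R0 = max (max N3 (10^8)) (3 * M)"
  have ev: "eventually (\<lambda>n. real R0 \<le> (real n powr (-2/5)) powr (-1/2)) sequentially"
    using AS3 by (simp add: filterlim_at_top)
  show ?thesis
    using ev
  proof eventually_elim
    case (elim n)
    define r where "r = r_of n"
    have rR0: "R0 \<le> r"
    proof -
      have "real R0 \<le> a_of n powr (-1/2)" using elim by (simp add: a_of_def)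
      hence "int R0 \<le> \<lfloor>a_of n powr (-1/2)\<rfloor>" by (simp add: le_floor_iff)
      thus ?thesis by (simp add: r_def r_of_def)
    qed
    show ?case
    proof (intro allI impI ballI)
      fix rs lt t
      assume H: "rs \<in> {1..r_of n} \<and> balance (r_of n) rs \<in> {20..21} \<and> lt > 0 \<and> htilde lt rs (r_of n) 1 = 1"
        and t: "t \<in> {-pi..pi}"
      have rs1: "1 \<le> rs" "rs \<le> r" using H by (auto simp: r_def)
      have bal: "20 \<le> balance r rs" using H by (auto simp: r_def)
      have lt0: "0 < lt" using H by simp
      have h1: "htilde lt rs r 1 = 1" using H by (simp add: r_def)
      have r3: "r \<le> 3*rs" using N3 rR0 rs1 bal by (auto simp: R0_def)
      have rsM: "M \<le> rs" using r3 rR0 by (simp add: R0_def)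
      have b1: "10^17 \<le> real rs"
      proof -
        have "(10^17::nat) \<le> rs" using rsM by (simp add: M_def)
        hence "real (10^17::nat) \<le> real rs" by (simp only: of_nat_le_iff)
        thus ?thesis by simp
      qed
      have b2: "10^6 \<le> real rs * w rs"
      proof -
        have "N1 \<le> real rs" using rsM by (simp add: M_def; linarith?)
        hence "(10^6::real) \<le> real rs / (ln (real rs + 3))^2" using N1 by blast
        thus ?thesis by (simp add: w_def)
      qed
      have rs3: "3 \<le> rs" using b1 by simp
      have b3: "10^8 \<le> r" using rR0 by (simp add: R0_def)
      have tp: "\<bar>t\<bar> \<le> pi" using t by auto
      define G where "G z = (\<Sum>j=1..r. complex_of_real (cc rs j) * z ^ j)" for z
      define S where "S = (\<Sum>j=1..r. cc rs j)"
      have core': "cmod (G (exp (\<i> * complex_of_real t))) \<le> S"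
        unfolding G_def S_def using rs3 rs1 r3 bal b1 b2 b3 tp by (intro core) auto
      have G1: "G 1 = complex_of_real S" by (simp add: G_def S_def)
      have "complex_of_real (lt * lam_a r) * complex_of_real S = 1"
        using h1 unfolding htilde_eq G_def[symmetric] G1 .
      hence prod: "lt * lam_a r * S = 1" by (metis of_real_1 of_real_eq_iff of_real_mult)
      have c0: "0 \<le> lt * lam_a r" using lt0 lam_nonneg[of r] by simp
      have "cmod (htilde lt rs r (exp (\<i> * complex_of_real t))) = (lt * lam_a r) * cmod (G (exp (\<i> * complex_of_real t)))"
      proof -
        have "cmod (complex_of_real (lt * lam_a r)) = lt * lam_a r"
          using c0 by (simp only: norm_of_real abs_of_nonneg)
        thus ?thesis unfolding htilde_eq G_def[symmetric] norm_mult by simp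
      qed
      also have "\<dots> \<le> (lt * lam_a r) * S" using core' c0 by (intro mult_left_mono)
      also have "\<dots> = 1" using prod .
      finally show "cmod (htilde lt rs (r_of n) (exp (\<i> * complex_of_real t))) \<le> 1" by (simp add: r_def)
    qed
  qed
qed


end
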